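(* Let $\Omega\subseteq\mathbb{R}$ and let $f,g:\Omega\to\mathbb{R}$ be twice differentiable such that $f'$ and $g'$ are invertible and the inverse functions $(f')^{-1},(g')^{-1}$ are differentiable and convex. Then for any $p,q\in\Omega$ and $z\in\mathbb{R}$ with $g'(q)=f'(p)-z$: $$q\ge p+\frac{f'(p)-g'(p)-z}{g''(p)},\qquad q\le p+\frac{f'(p)-g'(p)-z}{g''(q)},$$ $$q\ge p+\frac{f'(q)-g'(q)-z}{f''(p)},\qquad q\le p+\frac{f'(q)-g'(q)-z}{f''(q)}.$$ *)

theory Defs
  imports "HOL-Analysis.Analysis"
begin

end

theory Submission
  imports Defs "HOL-Homology.Invariance_of_Domain"
begin

lemma key:
  fixes \<Omega> :: "real set" and g g' :: "real \<Rightarrow> real" and a b :: real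
  assumes op: "open \<Omega>"
    and g2: "\<And>x. x \<in> \<Omega> \<Longrightarrow> (g has_real_derivative g' x) (at x)"
    and ginj: "inj_on g \<Omega>"
    and gdiff: "\<And>y. y \<in> g ` \<Omega> \<Longrightarrow> inv_into \<Omega> g differentiable (at y)"
    and gconv: "convex_on (g ` \<Omega>) (inv_into \<Omega> g)"
    and a: "a \<in> \<Omega>" and b: "b \<in> \<Omega>"
  shows "g' a \<noteq> 0 \<and> b \<ge> a + (g b - g a) / g' a"
proof -
  let ?h = "inv_into \<Omega> g"
  have cont: "continuous_on \<Omega> g"
    using g2 by (meson DERIV_isCont continuous_at_imp_continuous_on)
  have opA: "open (g ` \<Omega>)" by (rule invariance_of_domain[OF cont op ginj])
  have convA: "convex (g ` \<Omega>)" using gconv by (simp add: convex_on_def)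
  obtain D where D: "(?h has_real_derivative D) (at (g a))"
    using gdiff[of "g a"] a by (auto simp: real_differentiable_def)
  have c1: "((?h \<circ> g) has_real_derivative D * g' a) (at a)"
    using DERIV_chain[OF D g2[OF a]] by simp
  have c2: "((?h \<circ> g) has_real_derivative 1) (at a)"
  proof (rule has_field_derivative_transform_within_open[where f="\<lambda>x. x" and S=\<Omega>])
    show "((\<lambda>x. x) has_real_derivative 1) (at a)" by (rule DERIV_ident)
    show "\<And>x. x \<in> \<Omega> \<Longrightarrow> x = (?h \<circ> g) x" using ginj by simp
  qed (use op a in auto)
  have D1: "D * g' a = 1" using DERIV_unique[OF c1 c2] .
  hence nz: "g' a \<noteq> 0" by auto
  have "?h (g b) - ?h (g a) \<ge> D * (g b - g a)"
    apply (rule convex_on_imp_above_tangent[OF gconv])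
    using convA convex_connected apply blast
    using opA a apply (simp add: interior_open)
    using b apply simp
    using D has_field_derivative_at_within by blast
  hence "b - a \<ge> D * (g b - g a)" using ginj a b by simp
  moreover have "D = 1 / g' a" using D1 nz by (simp add: field_simps)
  ultimately show ?thesis using nz by (simp add: field_simps)
qed

theorem lemma34:
  fixes \<Omega> :: "real set"
    and f g f' g' f'' g'' :: "real \<Rightarrow> real"
    and p q z :: real
  assumes "open \<Omega>"
    and f1: "\<And>x. x \<in> \<Omega> \<Longrightarrow> (f has_real_derivative f' x) (at x)"
    and f2: "\<And>x. x \<in> \<Omega> \<Longrightarrow> (f' has_real_derivative f'' x) (at x)"
    and g1: "\<And>x. x \<in> \<Omega> \<Longrightarrow> (g has_real_derivative g' x) (at x)"
    and g2: "\<And>x. x \<in> \<Omega> \<Longrightarrow> (g' has_real_derivative g'' x) (at x)"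
    and finj: "inj_on f' \<Omega>"
    and ginj: "inj_on g' \<Omega>"
    and fdiff: "\<And>y. y \<in> f' ` \<Omega> \<Longrightarrow> inv_into \<Omega> f' differentiable (at y)"
    and gdiff: "\<And>y. y \<in> g' ` \<Omega> \<Longrightarrow> inv_into \<Omega> g' differentiable (at y)"
    and fconv: "convex_on (f' ` \<Omega>) (inv_into \<Omega> f')"
    and gconv: "convex_on (g' ` \<Omega>) (inv_into \<Omega> g')"
    and "p \<in> \<Omega>" and "q \<in> \<Omega>"
    and "g' q = f' p - z"
  shows "q \<ge> p + (f' p - g' p - z) / g'' p \<and>
         q \<le> p + (f' p - g' p - z) / g'' q \<and>
         q \<ge> p + (f' q - g' q - z) / f'' p \<and>
         q \<le> p + (f' q - g' q - z) / f'' q"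
proof -
  note kg = key[OF \<open>open \<Omega>\<close> g2 ginj gdiff gconv]
  note kf = key[OF \<open>open \<Omega>\<close> f2 finj fdiff fconv]
  have 1: "q \<ge> p + (g' q - g' p) / g'' p" using kg[of p q] assms by simp
  have 2: "p \<ge> q + (g' p - g' q) / g'' q" using kg[of q p] assms by simp
  have 3: "q \<ge> p + (f' q - f' p) / f'' p" using kf[of p q] assms by simp
  have 4: "p \<ge> q + (f' p - f' q) / f'' q" using kf[of q p] assms by simp
  have e1: "f' p - g' p - z = g' q - g' p" using assms by simp
  have e2: "f' q - g' q - z = f' q - f' p" using assms by simp
  have h2: "q \<le> p + (g' q - g' p) / g'' q"
    using 2 by (simp add: diff_divide_distrib)
  have h4: "q \<le> p + (f' q - f' p) / f'' q"
    using 4 by (simp add: diff_divide_distrib)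
  show ?thesis unfolding e1 e2 using 1 h2 3 h4 by simp
qed

end
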